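(* Let $n,g$ be integers with $0\leq g\leq \left\lfloor \frac{n-3}{2}\right\rfloor$, and let $G$ be a connected graph of order $n$ which has a $g$-good-neighbor cut. Then $$1\leq \kappa^g(G)\leq n-2g-2.$$ Moreover, the upper and lower bounds are sharp (each is attained with equality by some such graph).
   Context: Let $G=(V,E)$ be a connected graph and $g\ge 0$ an integer. A set $F\subseteq V$ is a $g$-good-neighbor faulty set if $|N(v)\cap (V-F)|\geq g$ for every vertex $v\in V-F$ (equivalently, every component of $G-F$ has minimum degree at least $g$). A $g$-good-neighbor cut of $G$ is a $g$-good-neighbor faulty set $F$ such that $G-F$ is disconnected. The $g$-good-neighbor connectivity $\kappa^g(G)$ is the minimum cardinality of a $g$-good-neighbor cut of $G$; it is defined only when $G$ has at least one $g$-good-neighbor cut. *)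

theory Defs
  imports Main
begin

definition simple_graph :: "'a set \<Rightarrow> ('a \<Rightarrow> 'a \<Rightarrow> bool) \<Rightarrow> bool" where
  "simple_graph V E \<longleftrightarrow> finite V \<and> (\<forall>u v. E u v \<longrightarrow> u \<in> V \<and> v \<in> V)
     \<and> (\<forall>u v. E u v \<longrightarrow> E v u) \<and> (\<forall>v. \<not> E v v)"

definition nbhd :: "'a set \<Rightarrow> ('a \<Rightarrow> 'a \<Rightarrow> bool) \<Rightarrow> 'a \<Rightarrow> 'a set" where
  "nbhd V E v = {u \<in> V. E v u}"

definition connected_on :: "('a \<Rightarrow> 'a \<Rightarrow> bool) \<Rightarrow> 'a set \<Rightarrow> bool" where
  "connected_on E S \<longleftrightarrow> S \<noteq> {} \<and>
     (\<forall>u\<in>S. \<forall>v\<in>S. (\<lambda>x y. E x y \<and> x \<in> S \<and> y \<in> S)\<^sup>*\<^sup>* u v)"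

definition connected_graph :: "'a set \<Rightarrow> ('a \<Rightarrow> 'a \<Rightarrow> bool) \<Rightarrow> bool" where
  "connected_graph V E \<longleftrightarrow> simple_graph V E \<and> connected_on E V"

definition good_neighbor_faulty :: "'a set \<Rightarrow> ('a \<Rightarrow> 'a \<Rightarrow> bool) \<Rightarrow> nat \<Rightarrow> 'a set \<Rightarrow> bool" where
  "good_neighbor_faulty V E g F \<longleftrightarrow> F \<subseteq> V \<and>
     (\<forall>v \<in> V - F. card (nbhd V E v \<inter> (V - F)) \<ge> g)"

text \<open>G - F disconnected: at least two components, i.e. nonempty and not connected.\<close>
definition good_neighbor_cut :: "'a set \<Rightarrow> ('a \<Rightarrow> 'a \<Rightarrow> bool) \<Rightarrow> nat \<Rightarrow> 'a set \<Rightarrow> bool" where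
  "good_neighbor_cut V E g F \<longleftrightarrow> good_neighbor_faulty V E g F \<and>
     V - F \<noteq> {} \<and> \<not> connected_on E (V - F)"

definition gn_connectivity :: "'a set \<Rightarrow> ('a \<Rightarrow> 'a \<Rightarrow> bool) \<Rightarrow> nat \<Rightarrow> nat" where
  "gn_connectivity V E g = (LEAST k. \<exists>F. good_neighbor_cut V E g F \<and> card F = k)"

end

theory Submission
  imports Defs
begin

lemma rtranclp_sym_aux:
  assumes sym: "\<And>x y. R x y \<Longrightarrow> R y x" and "R\<^sup>*\<^sup>* x y"
  shows "R\<^sup>*\<^sup>* y x"
  using assms(2)
proof (induction rule: rtranclp_induct)
  case base then show ?case by simp
next
  case (step y z)
  then show ?case using sym by (meson converse_rtranclp_into_rtranclp)
qed

lemma cut_bounds: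
  assumes cg: "connected_graph V E" and cut: "good_neighbor_cut V E g F"
  shows "1 \<le> card F \<and> card F + 2*g + 2 \<le> card V"
proof -
  have sg: "simple_graph V E" and cV: "connected_on E V" using cg connected_graph_def by auto
  have fV: "finite V" and irr: "\<And>v. \<not> E v v" and sym: "\<And>u v. E u v \<Longrightarrow> E v u"
    using sg unfolding simple_graph_def by auto
  have FV: "F \<subseteq> V" and good: "\<forall>v \<in> V - F. card (nbhd V E v \<inter> (V - F)) \<ge> g"
    and ne: "V - F \<noteq> {}" and nc: "\<not> connected_on E (V - F)"
    using cut unfolding good_neighbor_cut_def good_neighbor_faulty_def by auto
  have "F \<noteq> {}" using nc cV by auto
  moreover have fF: "finite F" using FV fV finite_subset by auto
  ultimately have c1: "1 \<le> card F" by (simp add: Suc_leI card_gt_0_iff)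
  define S where "S = V - F"
  define R where "R = (\<lambda>x y. E x y \<and> x \<in> S \<and> y \<in> S)"
  have symR: "\<And>x y. R x y \<Longrightarrow> R y x" using sym unfolding R_def by auto
  obtain u w where uS: "u \<in> S" and wS: "w \<in> S" and nuw: "\<not> R\<^sup>*\<^sup>* u w"
    using nc ne unfolding connected_on_def S_def R_def by auto
  define comp where "comp = (\<lambda>x. {y \<in> S. R\<^sup>*\<^sup>* x y})"
  have fS: "finite S" using fV S_def by auto
  have big: "g + 1 \<le> card (comp x)" if xS: "x \<in> S" for x
  proof -
    have sub: "insert x (nbhd V E x \<inter> S) \<subseteq> comp x"
      using xS unfolding comp_def nbhd_def R_def by auto
    have xn: "x \<notin> nbhd V E x \<inter> S" using irr unfolding nbhd_def by auto
    have fn: "finite (nbhd V E x \<inter> S)" using fS by auto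
    have "card (insert x (nbhd V E x \<inter> S)) = Suc (card (nbhd V E x \<inter> S))"
      using xn fn by simp
    moreover have "g \<le> card (nbhd V E x \<inter> S)" using good xS S_def by auto
    moreover have "card (insert x (nbhd V E x \<inter> S)) \<le> card (comp x)"
      using sub by (rule card_mono[rotated]) (simp add: comp_def fS)
    ultimately show ?thesis by simp
  qed
  have disj: "comp u \<inter> comp w = {}"
  proof (rule ccontr)
    assume "comp u \<inter> comp w \<noteq> {}"
    then obtain y where "R\<^sup>*\<^sup>* u y" "R\<^sup>*\<^sup>* w y" unfolding comp_def by auto
    then have "R\<^sup>*\<^sup>* y w" using rtranclp_sym_aux[of R w y] symR by blast
    then show False using nuw \<open>R\<^sup>*\<^sup>* u y\<close> by (meson rtranclp_trans)
  qed
  have "card (comp u \<union> comp w) = card (comp u) + card (comp w)"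
    using disj fS by (intro card_Un_disjoint) (auto simp: comp_def)
  moreover have "card (comp u \<union> comp w) \<le> card S"
    using fS by (intro card_mono) (auto simp: comp_def)
  moreover have "card S = card V - card F" using S_def fF FV card_Diff_subset by auto
  moreover have "card F \<le> card V" using FV fV card_mono by auto
  ultimately show ?thesis using c1 big[OF uS] big[OF wS] by linarith
qed

lemma gn_bounds:
  assumes cg: "connected_graph V E" and ex: "\<exists>F. good_neighbor_cut V E g F"
  shows "1 \<le> gn_connectivity V E g \<and> gn_connectivity V E g + 2*g + 2 \<le> card V"
proof -
  have "\<exists>F. good_neighbor_cut V E g F \<and> card F = gn_connectivity V E g"
    unfolding gn_connectivity_def
    using LeastI_ex[of "\<lambda>k. \<exists>F. good_neighbor_cut V E g F \<and> card F = k"] ex by auto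
  then obtain F where "good_neighbor_cut V E g F" "card F = gn_connectivity V E g" by blast
  then show ?thesis using cut_bounds[OF cg, of g F] by simp
qed

lemma constr:
  fixes A B :: "nat set"
  assumes AV: "A \<subseteq> {..<N}" and BV: "B \<subseteq> {..<N}" and AB: "A \<inter> B = {}"
    and Cne: "{..<N} - A - B \<noteq> {}" and cA: "g + 1 \<le> card A" and cB: "g + 1 \<le> card B"
  defines "E \<equiv> (\<lambda>u v. u \<noteq> v \<and> u < N \<and> v < N \<and> \<not>(u \<in> A \<and> v \<in> B) \<and> \<not>(u \<in> B \<and> v \<in> A))"
  shows "connected_graph {..<N} E \<and> good_neighbor_cut {..<N} E g ({..<N} - A - B)
     \<and> gn_connectivity {..<N} E g = card ({..<N} - A - B)"
proof -
  define V where "V = {..<N}"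
  define C where "C = V - A - B"
  obtain c where cC: "c \<in> C" using Cne C_def V_def by auto
  have Ec: "\<And>x. x \<in> V \<Longrightarrow> x \<noteq> c \<Longrightarrow> E x c \<and> E c x"
    using cC unfolding E_def C_def V_def by auto
  have conn: "connected_on E S" if SV: "S \<subseteq> V" and cS: "c \<in> S" for S
  proof -
    let ?R = "\<lambda>x y. E x y \<and> x \<in> S \<and> y \<in> S"
    have "?R\<^sup>*\<^sup>* x y" if "x \<in> S" "y \<in> S" for x y
    proof -
      have "?R\<^sup>*\<^sup>* x c"
        using Ec[of x] that SV cS by (cases "x = c") auto
      moreover have "?R\<^sup>*\<^sup>* c y"
        using Ec[of y] that SV cS by (cases "y = c") auto
      ultimately show ?thesis by simp
    qed
    then show ?thesis unfolding connected_on_def using cS by auto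
  qed
  have sg: "simple_graph V E" unfolding simple_graph_def V_def E_def by auto
  have cg: "connected_graph V E" unfolding connected_graph_def using sg conn[of V] cC C_def by auto
  have fA: "finite A" and fB: "finite B" using AV BV finite_subset by auto
  have SAB: "V - C = A \<union> B" using AV BV C_def V_def by auto
  have good: "good_neighbor_faulty V E g C"
    unfolding good_neighbor_faulty_def
  proof (intro conjI ballI)
    show "C \<subseteq> V" using C_def by auto
    fix v assume "v \<in> V - C"
    then have vAB: "v \<in> A \<or> v \<in> B" using SAB by auto
    show "g \<le> card (nbhd V E v \<inter> (V - C))"
    proof (cases "v \<in> A")
      case True
      have "A - {v} \<subseteq> nbhd V E v \<inter> (V - C)"
        using True AV AB SAB unfolding nbhd_def E_def V_def by auto
      moreover have "card (A - {v}) \<ge> g" using cA True fA by simp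
      moreover have "finite (nbhd V E v \<inter> (V - C))" using V_def by auto
      ultimately show ?thesis using card_mono le_trans by metis
    next
      case False
      then have vB: "v \<in> B" using vAB by auto
      have "B - {v} \<subseteq> nbhd V E v \<inter> (V - C)"
        using vB BV AB SAB unfolding nbhd_def E_def V_def by auto
      moreover have "card (B - {v}) \<ge> g" using cB vB fB by simp
      moreover have "finite (nbhd V E v \<inter> (V - C))" using V_def by auto
      ultimately show ?thesis using card_mono le_trans by metis
    qed
  qed
  have "A \<noteq> {}" using cA by auto
  then obtain a where aA: "a \<in> A" by auto
  have "B \<noteq> {}" using cB by auto
  then obtain b where bB: "b \<in> B" by auto
  have nc: "\<not> connected_on E (V - C)"
  proof
    assume "connected_on E (V - C)"
    then have r: "(\<lambda>x y. E x y \<and> x \<in> V - C \<and> y \<in> V - C)\<^sup>*\<^sup>* a b"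
      unfolding connected_on_def using aA bB SAB by auto
    have "y \<in> A" if "(\<lambda>x y. E x y \<and> x \<in> V - C \<and> y \<in> V - C)\<^sup>*\<^sup>* a y" for y
      using that
    proof (induction rule: rtranclp_induct)
      case base then show ?case using aA by simp
    next
      case (step y z) then show ?case using SAB unfolding E_def by auto
    qed
    then show False using r bB AB by auto
  qed
  have cut: "good_neighbor_cut V E g C"
    unfolding good_neighbor_cut_def using good nc SAB aA by auto
  have minc: "card C \<le> card F" if "good_neighbor_cut V E g F" for F
  proof -
    have FV: "F \<subseteq> V" and nc': "\<not> connected_on E (V - F)"
      using that unfolding good_neighbor_cut_def good_neighbor_faulty_def by auto
    have "C \<subseteq> F"
    proof
      fix x assume xC: "x \<in> C"
      show "x \<in> F"
      proof (rule ccontr)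
        assume "x \<notin> F"
        have Ex: "\<And>y. y \<in> V \<Longrightarrow> y \<noteq> x \<Longrightarrow> E y x \<and> E x y"
          using xC unfolding E_def C_def V_def by auto
        let ?S = "V - F"
        let ?R = "\<lambda>u v. E u v \<and> u \<in> ?S \<and> v \<in> ?S"
        have xS: "x \<in> ?S" using xC \<open>x \<notin> F\<close> C_def by auto
        have "?R\<^sup>*\<^sup>* u v" if "u \<in> ?S" "v \<in> ?S" for u v
        proof -
          have "?R\<^sup>*\<^sup>* u x" using Ex[of u] that xS by (cases "u = x") auto
          moreover have "?R\<^sup>*\<^sup>* x v" using Ex[of v] that xS by (cases "v = x") auto
          ultimately show ?thesis by simp
        qed
        then have "connected_on E ?S" unfolding connected_on_def using xS by auto
        then show False using nc' by simp
      qed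
    qed
    then show ?thesis using FV V_def card_mono finite_subset by (metis finite_lessThan)
  qed
  have "gn_connectivity V E g = card C"
    unfolding gn_connectivity_def
    by (rule Least_equality) (use cut minc in auto)
  then show ?thesis using cg cut V_def C_def by simp
qed

theorem corollary2p1:
  fixes n g :: int
  assumes "0 \<le> g" and "g \<le> (n - 3) div 2"
  shows "(\<forall>(V :: 'a set) E. connected_graph V E \<and> int (card V) = n \<and>
            (\<exists>F. good_neighbor_cut V E (nat g) F) \<longrightarrow>
            1 \<le> int (gn_connectivity V E (nat g)) \<and>
            int (gn_connectivity V E (nat g)) \<le> n - 2 * g - 2)
       \<and> (\<exists>(V :: nat set) E. connected_graph V E \<and> int (card V) = n \<and>
            (\<exists>F. good_neighbor_cut V E (nat g) F) \<and> gn_connectivity V E (nat g) = 1)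
       \<and> (\<exists>(V :: nat set) E. connected_graph V E \<and> int (card V) = n \<and>
            (\<exists>F. good_neighbor_cut V E (nat g) F) \<and>
            int (gn_connectivity V E (nat g)) = n - 2 * g - 2)"
proof (intro conjI)
  define G where "G = nat g"
  define N where "N = nat n"
  have gG: "g = int G" using assms(1) G_def by simp
  have "2 * g \<le> n - 3" using assms(2) by linarith
  then have nN: "n = int N" and GN: "2 * G + 3 \<le> N" using gG N_def by auto
  show "\<forall>(V :: 'a set) E. connected_graph V E \<and> int (card V) = n \<and>
            (\<exists>F. good_neighbor_cut V E (nat g) F) \<longrightarrow>
            1 \<le> int (gn_connectivity V E (nat g)) \<and>
            int (gn_connectivity V E (nat g)) \<le> n - 2 * g - 2"
  proof (intro allI impI)
    fix V :: "'a set" and E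
    assume h: "connected_graph V E \<and> int (card V) = n \<and> (\<exists>F. good_neighbor_cut V E (nat g) F)"
    then have "1 \<le> gn_connectivity V E G \<and> gn_connectivity V E G + 2*G + 2 \<le> card V"
      using gn_bounds G_def by blast
    then show "1 \<le> int (gn_connectivity V E (nat g)) \<and>
            int (gn_connectivity V E (nat g)) \<le> n - 2 * g - 2"
      using h gG unfolding G_def[symmetric] by linarith
  qed
  show "\<exists>(V :: nat set) E. connected_graph V E \<and> int (card V) = n \<and>
            (\<exists>F. good_neighbor_cut V E (nat g) F) \<and> gn_connectivity V E (nat g) = 1"
  proof -
    have C: "{..<N} - {1..G+1} - {G+2..<N} = {0}" using GN by auto
    have cB: "card {G+2..<N} \<ge> G + 1" using GN by simp
    have C0: "{..<N} - {1..G+1} - {G+2..<N} \<noteq> {}" using C by simp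
    have "connected_graph {..<N} (\<lambda>u v. u \<noteq> v \<and> u < N \<and> v < N \<and> \<not>(u \<in> {1..G+1} \<and> v \<in> {G+2..<N}) \<and> \<not>(u \<in> {G+2..<N} \<and> v \<in> {1..G+1}))
      \<and> good_neighbor_cut {..<N} (\<lambda>u v. u \<noteq> v \<and> u < N \<and> v < N \<and> \<not>(u \<in> {1..G+1} \<and> v \<in> {G+2..<N}) \<and> \<not>(u \<in> {G+2..<N} \<and> v \<in> {1..G+1})) G ({..<N} - {1..G+1} - {G+2..<N})
      \<and> gn_connectivity {..<N} (\<lambda>u v. u \<noteq> v \<and> u < N \<and> v < N \<and> \<not>(u \<in> {1..G+1} \<and> v \<in> {G+2..<N}) \<and> \<not>(u \<in> {G+2..<N} \<and> v \<in> {1..G+1})) G = card ({..<N} - {1..G+1} - {G+2..<N})"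
      by (rule constr[OF _ _ _ C0]) (use GN cB in auto)
    then show ?thesis using C nN G_def by (intro exI[of _ "{..<N}"]) auto
  qed
  show "\<exists>(V :: nat set) E. connected_graph V E \<and> int (card V) = n \<and>
            (\<exists>F. good_neighbor_cut V E (nat g) F) \<and>
            int (gn_connectivity V E (nat g)) = n - 2 * g - 2"
  proof -
    have C: "{..<N} - {0..<G+1} - {G+1..<2*G+2} = {2*G+2..<N}" by auto
    have ne: "{2*G+2..<N} \<noteq> {}" using GN by auto
    have "connected_graph {..<N} (\<lambda>u v. u \<noteq> v \<and> u < N \<and> v < N \<and> \<not>(u \<in> {0..<G+1} \<and> v \<in> {G+1..<2*G+2}) \<and> \<not>(u \<in> {G+1..<2*G+2} \<and> v \<in> {0..<G+1}))
      \<and> good_neighbor_cut {..<N} (\<lambda>u v. u \<noteq> v \<and> u < N \<and> v < N \<and> \<not>(u \<in> {0..<G+1} \<and> v \<in> {G+1..<2*G+2}) \<and> \<not>(u \<in> {G+1..<2*G+2} \<and> v \<in> {0..<G+1})) G ({..<N} - {0..<G+1} - {G+1..<2*G+2})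
      \<and> gn_connectivity {..<N} (\<lambda>u v. u \<noteq> v \<and> u < N \<and> v < N \<and> \<not>(u \<in> {0..<G+1} \<and> v \<in> {G+1..<2*G+2}) \<and> \<not>(u \<in> {G+1..<2*G+2} \<and> v \<in> {0..<G+1})) G = card ({..<N} - {0..<G+1} - {G+1..<2*G+2})"
      apply (rule constr)
      using GN apply auto[1]
      using GN apply auto[1]
        apply auto[1]
       apply (subst C, rule ne)
      by simp_all
    then obtain E3 where H: "connected_graph {..<N} E3" "good_neighbor_cut {..<N} E3 G ({..<N} - {0..<G+1} - {G+1..<2*G+2})"
      "gn_connectivity {..<N} E3 G = card ({..<N} - {0..<G+1} - {G+1..<2*G+2})" by blast
    have cc: "card ({..<N} - {0..<G+1} - {G+1..<2*G+2}) = N - (2*G+2)" unfolding C by simp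
    have i1: "int (card {..<N}) = n" using nN by simp
    have i2: "int (N - (2*G+2)) = n - 2*g - 2" using nN gG GN by simp
    show ?thesis unfolding G_def[symmetric]
      by (rule exI[of _ "{..<N}"], rule exI[of _ E3]) (use H cc i1 i2 in metis)
  qed
qed

end
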